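(* Let $k\ge2$ be fixed. Then $m_k(n)/\gamma_k(n)\to1$ as $n\to\infty$.
   Context: Let $G=\{g_1=e,\dots,g_k\}$ be a group of order $k$. A labeled graph on $G$ with $n$ edges has vertex set $G$ and $n$ directed edges labeled $1,\dots,n$, each an ordered pair of vertices (loops and multiple edges allowed). The degree of a vertex is the number of edges having it as initial or terminal point, a loop counted twice. $m_k(n)$ is the number of such graphs having an Eulerian path starting at $e$ in the underlying undirected graph (a walk ignoring orientations starting at $e$ and using each edge exactly once). A graph has an Eulerian pseudo-path from $e$ to $g_i$ if all vertices other than $e,g_i$ have even degree, $\deg e$ is even when $g_i=e$, and $\deg e,\deg g_i$ are odd when $g_i\neq e$ (no connectivity required); $\gamma_k(n)$ is the number of labeled graphs on $G$ with $n$ edges having an Eulerian pseudo-path from $e$ to some vertex of $G$. *)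

theory Defs
  imports "HOL-Algebra.Group" "HOL-Library.FuncSet" Complex_Main
begin

text \<open>A labeled graph on vertex set V with n edges: a map from the edge labels
  {1..n} to ordered pairs of vertices (initial point, terminal point).
  Loops and multiple edges are allowed.\<close>

definition labeled_graphs :: "'a set \<Rightarrow> nat \<Rightarrow> (nat \<Rightarrow> 'a \<times> 'a) set" where
  "labeled_graphs V n = ({1..n} \<rightarrow>\<^sub>E V \<times> V)"

definition deg :: "(nat \<Rightarrow> 'a \<times> 'a) \<Rightarrow> nat \<Rightarrow> 'a \<Rightarrow> nat" where
  "deg E n v = card {i \<in> {1..n}. fst (E i) = v} + card {i \<in> {1..n}. snd (E i) = v}"

definition has_eulerian_path_from :: "(nat \<Rightarrow> 'a \<times> 'a) \<Rightarrow> nat \<Rightarrow> 'a \<Rightarrow> bool" where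
  "has_eulerian_path_from E n s \<longleftrightarrow>
     (\<exists>p vs. bij_betw p {..<n} {1..n} \<and> vs 0 = s \<and>
        (\<forall>j<n. E (p j) = (vs j, vs (Suc j)) \<or> E (p j) = (vs (Suc j), vs j)))"

definition has_eulerian_pseudo_path :: "'a set \<Rightarrow> (nat \<Rightarrow> 'a \<times> 'a) \<Rightarrow> nat \<Rightarrow> 'a \<Rightarrow> 'a \<Rightarrow> bool" where
  "has_eulerian_pseudo_path V E n s t \<longleftrightarrow>
     (\<forall>v\<in>V. v \<noteq> s \<and> v \<noteq> t \<longrightarrow> even (deg E n v)) \<and>
     (if t = s then even (deg E n s) else odd (deg E n s) \<and> odd (deg E n t))"

definition m_count :: "('a, 'b) monoid_scheme \<Rightarrow> nat \<Rightarrow> nat" where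
  "m_count G n = card {E \<in> labeled_graphs (carrier G) n. has_eulerian_path_from E n \<one>\<^bsub>G\<^esub>}"

definition gamma_count :: "('a, 'b) monoid_scheme \<Rightarrow> nat \<Rightarrow> nat" where
  "gamma_count G n = card {E \<in> labeled_graphs (carrier G) n.
      \<exists>g \<in> carrier G. has_eulerian_pseudo_path (carrier G) E n \<one>\<^bsub>G\<^esub> g}"

end

theory Submission
  imports Defs
begin


definition dg :: "(nat \<Rightarrow> 'a \<times> 'a) \<Rightarrow> nat set \<Rightarrow> 'a \<Rightarrow> nat" where
  "dg E J v = (\<Sum>i\<in>J. of_bool (fst (E i) = v) + of_bool (snd (E i) = v))"

lemma deg_dg: "deg E n v = dg E {1..n} v"
  unfolding deg_def dg_def by (simp add: sum.distrib Int_def conj_commute)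

lemma handshake:
  assumes "finite J" "finite V" "E ` J \<subseteq> V \<times> V"
  shows "(\<Sum>v\<in>V. dg E J v) = 2 * card J"
proof -
  have "(\<Sum>v\<in>V. dg E J v) = (\<Sum>i\<in>J. \<Sum>v\<in>V. of_bool (fst (E i) = v) + of_bool (snd (E i) = v))"
    unfolding dg_def by (rule sum.swap)
  also have "\<dots> = (\<Sum>i\<in>J. 2)"
  proof (rule sum.cong)
    fix i assume "i \<in> J"
    then have "fst (E i) \<in> V" "snd (E i) \<in> V" using assms(3) by auto
    then show "(\<Sum>v\<in>V. of_bool (fst (E i) = v) + of_bool (snd (E i) = v)) = (2::nat)"
      using assms(2) by (simp add: sum.distrib)
  qed simp
  finally show ?thesis by simp
qed

lemma odd_set_even:
  assumes "finite J" "finite V" "E ` J \<subseteq> V \<times> V"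
  shows "even (card {v\<in>V. odd (dg E J v)})"
  using handshake[OF assms] even_sum_iff[OF assms(2), of "dg E J"] by simp

lemma dg_union: "finite A \<Longrightarrow> finite B \<Longrightarrow> A \<inter> B = {} \<Longrightarrow> dg E (A \<union> B) v = dg E A v + dg E B v"
  unfolding dg_def by (rule sum.union_disjoint)

lemma dg_zero: "finite A \<Longrightarrow> (\<forall>i\<in>A. fst (E i) \<noteq> v \<and> snd (E i) \<noteq> v) \<Longrightarrow> dg E A v = 0"
  unfolding dg_def by simp

lemma dg_cong: "(\<And>i. i \<in> A \<Longrightarrow> E i = F i) \<Longrightarrow> dg E A v = dg F A v"
  unfolding dg_def by (rule sum.cong) auto



definition adj :: "(nat \<Rightarrow> 'a \<times> 'a) \<Rightarrow> nat set \<Rightarrow> 'a \<Rightarrow> 'a \<Rightarrow> bool" where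
  "adj E J x y \<longleftrightarrow> (\<exists>i\<in>J. E i = (x,y) \<or> E i = (y,x))"

abbreviation reach where "reach E J \<equiv> (adj E J)\<^sup>*\<^sup>*"

definition pp :: "(nat \<Rightarrow> 'a \<times> 'a) \<Rightarrow> nat set \<Rightarrow> 'a \<Rightarrow> 'a \<Rightarrow> bool" where
  "pp E J s t \<longleftrightarrow> (\<forall>v. odd (dg E J v) = ((v = s) \<noteq> (v = t)))"

definition conn :: "(nat \<Rightarrow> 'a \<times> 'a) \<Rightarrow> nat set \<Rightarrow> 'a \<Rightarrow> bool" where
  "conn E J s \<longleftrightarrow> (\<forall>i\<in>J. reach E J s (fst (E i)))"

inductive trail :: "(nat \<Rightarrow> 'a \<times> 'a) \<Rightarrow> 'a \<Rightarrow> nat list \<Rightarrow> 'a \<Rightarrow> bool" for E where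
  nil: "trail E s [] s"
| cons: "E i = (s,u) \<or> E i = (u,s) \<Longrightarrow> trail E u xs t \<Longrightarrow> trail E s (i # xs) t"

lemma trail_append: "trail E s xs u \<Longrightarrow> trail E u ys t \<Longrightarrow> trail E s (xs @ ys) t"
  by (induction rule: trail.induct) (auto intro: trail.intros)

lemma dg_remove: "finite J \<Longrightarrow> i \<in> J \<Longrightarrow>
   dg E J v = dg E (J - {i}) v + of_bool (fst (E i) = v) + of_bool (snd (E i) = v)"
  unfolding dg_def by (simp add: sum.remove)

lemma euler:
  "finite J \<Longrightarrow> pp E J s t \<Longrightarrow> conn E J s \<Longrightarrow> \<exists>xs. trail E s xs t \<and> distinct xs \<and> set xs = J"
proof (induction "card J" arbitrary: J s t rule: less_induct)
  case less
  show ?case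
  proof (cases "J = {}")
    case True
    then have "s = t" using less.prems(2) unfolding pp_def dg_def by auto
    then show ?thesis using True by (auto intro: trail.intros)
  next
    case False
    then obtain j where j: "j \<in> J" by auto
    have rj: "reach E J s (fst (E j))" using less.prems(3) j unfolding conn_def by auto
    obtain i u where i: "i \<in> J" and iu: "E i = (s,u) \<or> E i = (u,s)"
    proof (cases "fst (E j) = s")
      case True then show ?thesis using that[of j "snd (E j)"] j by (cases "E j") auto
    next
      case False
      from rj False obtain y where "adj E J s y" by (metis converse_rtranclpE)
      then show ?thesis using that unfolding adj_def by blast
    qed
    define J' where "J' = J - {i}"
    define R where "R = {y. reach E J' u y}"
    define C where "C = {j\<in>J'. fst (E j) \<in> R}"
    define D where "D = J' - C"
    have finJ': "finite J'" using less.prems(1) unfolding J'_def by auto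
    have finC: "finite C" using finJ' unfolding C_def by auto
    have finD: "finite D" using finJ' unfolding D_def by auto
    have uR: "u \<in> R" unfolding R_def by auto
    have ppJ': "pp E J' u t"
      unfolding pp_def
    proof
      fix v
      have ob: "(of_bool (fst (E i) = v) + of_bool (snd (E i) = v) :: nat) = of_bool (s = v) + of_bool (u = v)"
        using iu by (elim disjE) auto
      have e: "dg E J v = dg E J' v + of_bool (s = v) + of_bool (u = v)"
        using dg_remove[OF less.prems(1) i, of E v] ob unfolding J'_def by simp
      have "odd (dg E J v) = ((v = s) \<noteq> (v = t))" using less.prems(2) unfolding pp_def by auto
      then show "odd (dg E J' v) = ((v = u) \<noteq> (v = t))" using e
        by (cases "v = s"; cases "v = u"; cases "v = t"; auto)
    qed
    have adjR: "fst (E j) \<in> R \<longleftrightarrow> snd (E j) \<in> R" if "j \<in> J'" for j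
    proof
      assume "fst (E j) \<in> R"
      moreover have "adj E J' (fst (E j)) (snd (E j))" using that unfolding adj_def
        by (cases "E j") auto
      ultimately show "snd (E j) \<in> R" unfolding R_def by (auto intro: rtranclp.rtrancl_into_rtrancl)
    next
      assume "snd (E j) \<in> R"
      moreover have "adj E J' (snd (E j)) (fst (E j))" using that unfolding adj_def
        by (cases "E j") auto
      ultimately show "fst (E j) \<in> R" unfolding R_def by (auto intro: rtranclp.rtrancl_into_rtrancl)
    qed
    have Cin: "fst (E j) \<in> R \<and> snd (E j) \<in> R" if "j \<in> C" for j
      using that adjR unfolding C_def by auto
    have Dout: "fst (E j) \<notin> R \<and> snd (E j) \<notin> R" if "j \<in> D" for j
      using that adjR unfolding C_def D_def by auto
    have dgsplit: "dg E J' v = dg E C v + dg E D v" for v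
    proof -
      have "J' = C \<union> D" "C \<inter> D = {}" unfolding C_def D_def by auto
      then show ?thesis using dg_union[OF finC finD] by metis
    qed
    have dgD0: "dg E D v = 0" if "v \<in> R" for v
      using dg_zero[OF finD] Dout that by metis
    have dgC0: "dg E C v = 0" if "v \<notin> R" for v
      using dg_zero[OF finC] Cin that by metis
    have Deven: "even (dg E D v)" for v
    proof -
      define W where "W = fst ` E ` D \<union> snd ` E ` D"
      have finW: "finite W" unfolding W_def using finD by auto
      have EW: "E ` D \<subseteq> W \<times> W" unfolding W_def
      proof
        fix x assume "x \<in> E ` D"
        then obtain j where j: "j \<in> D" "x = E j" by auto
        have "fst (E j) \<in> fst ` E ` D" "snd (E j) \<in> snd ` E ` D" using j by auto
        then show "x \<in> (fst ` E ` D \<union> snd ` E ` D) \<times> (fst ` E ` D \<union> snd ` E ` D)"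
          using j by (simp add: mem_Times_iff)
      qed
      have sub: "{v\<in>W. odd (dg E D v)} \<subseteq> {t}"
      proof
        fix v assume "v \<in> {v\<in>W. odd (dg E D v)}"
        then have o: "odd (dg E D v)" by auto
        then have "v \<notin> R" using dgD0 by fastforce
        then have "odd (dg E J' v)" "v \<noteq> u" using o dgsplit dgC0 uR by auto
        then show "v \<in> {t}" using ppJ' unfolding pp_def by auto
      qed
      have "even (card {v\<in>W. odd (dg E D v)})" by (rule odd_set_even[OF finD finW EW])
      moreover have "card {v\<in>W. odd (dg E D v)} \<le> 1" using card_mono[OF _ sub] by auto
      ultimately have "card {v\<in>W. odd (dg E D v)} = 0" by presburger
      then have emp: "{v\<in>W. odd (dg E D v)} = {}" using finW by auto
      show ?thesis
      proof (cases "v \<in> W")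
        case True then show ?thesis using emp by auto
      next
        case False
        then have "dg E D v = 0" by (intro dg_zero[OF finD]) (auto simp: W_def)
        then show ?thesis by simp
      qed
    qed
    have tR: "t \<in> R"
    proof (rule ccontr)
      assume "t \<notin> R"
      then have "t \<noteq> u" using uR by auto
      then have "odd (dg E J' t)" using ppJ' unfolding pp_def by auto
      then have "odd (dg E D t)" using dgsplit dgC0 \<open>t \<notin> R\<close> by auto
      then show False using Deven by auto
    qed
    have ppD: "pp E D s s" unfolding pp_def using Deven by auto
    have ppC: "pp E C u t" unfolding pp_def
    proof
      fix v
      show "odd (dg E C v) = ((v = u) \<noteq> (v = t))"
      proof (cases "v \<in> R")
        case True
        then have "dg E C v = dg E J' v" using dgsplit dgD0 by simp
        then show ?thesis using ppJ' unfolding pp_def by simp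
      next
        case False
        then show ?thesis using dgC0 uR tR by auto
      qed
    qed
    have reachC: "reach E C u y" if "reach E J' u y" for y
      using that
    proof (induction rule: rtranclp_induct)
      case base then show ?case by simp
    next
      case (step y z)
      from step.hyps(2) obtain l where l: "l \<in> J'" "E l = (y,z) \<or> E l = (z,y)"
        unfolding adj_def by auto
      have "y \<in> R" using step.hyps(1) unfolding R_def by auto
      then have "fst (E l) \<in> R" using adjR[OF l(1)] l(2) by auto
      then have "l \<in> C" using l(1) unfolding C_def by auto
      then have "adj E C y z" using l(2) unfolding adj_def by auto
      then show ?case using step.IH by (auto intro: rtranclp.rtrancl_into_rtrancl)
    qed
    have connC: "conn E C u" unfolding conn_def
      using reachC unfolding C_def R_def by auto
    have reachD: "y \<in> R \<or> reach E D s y" if "reach E J s y" for y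
      using that
    proof (induction rule: rtranclp_induct)
      case base then show ?case by simp
    next
      case (step y z)
      from step.hyps(2) obtain l where l: "l \<in> J" "E l = (y,z) \<or> E l = (z,y)"
        unfolding adj_def by auto
      show ?case
      proof (cases "l = i")
        case True
        then have "z = s \<or> z = u" using l(2) iu by auto
        then show ?thesis using uR by auto
      next
        case False
        then have lJ': "l \<in> J'" using l(1) unfolding J'_def by auto
        show ?thesis
        proof (cases "y \<in> R")
          case True
          then show ?thesis using adjR[OF lJ'] l(2) by auto
        next
          case False
          then have rD: "reach E D s y" using step.IH by auto
          have "l \<notin> C"
          proof
            assume "l \<in> C"
            then have "fst (E l) \<in> R" "snd (E l) \<in> R" using Cin by auto
            then show False using False l(2) by (elim disjE) auto
          qed
          then have "l \<in> D" using lJ' unfolding D_def by auto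
          then have "adj E D y z" using l(2) unfolding adj_def by auto
          then show ?thesis using rD by (auto intro: rtranclp.rtrancl_into_rtrancl)
        qed
      qed
    qed
    have connD: "conn E D s" unfolding conn_def
    proof
      fix j assume jD: "j \<in> D"
      then have "j \<in> J" unfolding D_def J'_def by auto
      then have "reach E J s (fst (E j))" using less.prems(3) unfolding conn_def by auto
      then show "reach E D s (fst (E j))" using reachD Dout[OF jD] by auto
    qed
    have "C \<subset> J" using i unfolding C_def J'_def by auto
    then have cC: "card C < card J" using less.prems(1) by (meson psubset_card_mono)
    have "D \<subset> J" using i unfolding D_def J'_def by auto
    then have cD: "card D < card J" using less.prems(1) by (meson psubset_card_mono)
    obtain xc where xc: "trail E u xc t" "distinct xc" "set xc = C"
      using less.hyps[OF cC finC ppC connC] by blast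
    obtain xd where xd: "trail E s xd s" "distinct xd" "set xd = D"
      using less.hyps[OF cD finD ppD connD] by blast
    have "trail E s (xd @ i # xc) t"
      using trail_append[OF xd(1) trail.cons[OF iu xc(1)]] .
    moreover have "distinct (xd @ i # xc)"
      using xc xd unfolding C_def D_def J'_def by auto
    moreover have "set (xd @ i # xc) = J"
      using xc xd i unfolding C_def D_def J'_def by auto
    ultimately show ?thesis by blast
  qed
qed



lemma trail_vs: "trail E s xs t \<Longrightarrow> \<exists>vs. vs 0 = s \<and> vs (length xs) = t \<and>
   (\<forall>j<length xs. E (xs!j) = (vs j, vs (Suc j)) \<or> E (xs!j) = (vs (Suc j), vs j))"
proof (induction rule: trail.induct)
  case (nil s)
  then show ?case by (intro exI[of _ "\<lambda>_. s"]) auto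
next
  case (cons i s u xs t)
  then obtain vs where vs: "vs 0 = u" "vs (length xs) = t"
    "\<forall>j<length xs. E (xs!j) = (vs j, vs (Suc j)) \<or> E (xs!j) = (vs (Suc j), vs j)" by blast
  define ws where "ws = (\<lambda>j. if j = 0 then s else vs (j - 1))"
  have "\<forall>j<length (i # xs). E ((i#xs)!j) = (ws j, ws (Suc j)) \<or> E ((i#xs)!j) = (ws (Suc j), ws j)"
  proof (intro allI impI)
    fix j assume "j < length (i # xs)"
    then show "E ((i#xs)!j) = (ws j, ws (Suc j)) \<or> E ((i#xs)!j) = (ws (Suc j), ws j)"
      using vs cons.hyps(1) unfolding ws_def by (cases j) auto
  qed
  moreover have "ws 0 = s" "ws (length (i#xs)) = t" using vs by (simp_all add: ws_def)
  ultimately show ?case by blast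
qed

lemma euler_path:
  assumes "pp E {1..n} s t" "conn E {1..n} s"
  shows "has_eulerian_path_from E n s"
proof -
  obtain xs where xs: "trail E s xs t" "distinct xs" "set xs = {1..n}"
    using euler[OF _ assms] by auto
  have len: "length xs = n" using distinct_card[OF xs(2)] xs(3) by simp
  obtain vs where vs: "vs 0 = s"
    "\<forall>j<length xs. E (xs!j) = (vs j, vs (Suc j)) \<or> E (xs!j) = (vs (Suc j), vs j)"
    using trail_vs[OF xs(1)] by blast
  have "bij_betw ((!) xs) {..<n} {1..n}" using bij_betw_nth[OF xs(2)] len xs(3) by simp
  then show ?thesis unfolding has_eulerian_path_from_def using vs len by blast
qed

lemma walk_parity:
  "odd (\<Sum>j<n. (of_bool (vs j = v) + of_bool (vs (Suc j) = v)) :: nat) \<longleftrightarrow> ((vs 0 = v) \<noteq> (vs n = v))"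
  by (induction n) auto



lemma path_pseudo:
  assumes "has_eulerian_path_from E n s" "E \<in> labeled_graphs V n" "s \<in> V"
  shows "\<exists>g\<in>V. has_eulerian_pseudo_path V E n s g"
proof -
  obtain p vs where pv: "bij_betw p {..<n} {1..n}" "vs 0 = s"
    "\<forall>j<n. E (p j) = (vs j, vs (Suc j)) \<or> E (p j) = (vs (Suc j), vs j)"
    using assms(1) unfolding has_eulerian_path_from_def by blast
  have dgv: "odd (deg E n v) \<longleftrightarrow> ((s = v) \<noteq> (vs n = v))" for v
  proof -
    have "deg E n v = (\<Sum>i\<in>{1..n}. of_bool (fst (E i) = v) + of_bool (snd (E i) = v))"
      unfolding deg_dg dg_def ..
    also have "\<dots> = (\<Sum>j<n. of_bool (fst (E (p j)) = v) + of_bool (snd (E (p j)) = v))"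
      by (rule sum.reindex_bij_betw[OF pv(1), of "\<lambda>i. of_bool (fst (E i) = v) + of_bool (snd (E i) = v)", symmetric])
    also have "\<dots> = (\<Sum>j<n. of_bool (vs j = v) + of_bool (vs (Suc j) = v))"
    proof (rule sum.cong)
      fix j assume "j \<in> {..<n}"
      then have "E (p j) = (vs j, vs (Suc j)) \<or> E (p j) = (vs (Suc j), vs j)" using pv(3) by blast
      then show "(of_bool (fst (E (p j)) = v) + of_bool (snd (E (p j)) = v) :: nat) =
          of_bool (vs j = v) + of_bool (vs (Suc j) = v)" by (elim disjE) auto
    qed simp
    finally show ?thesis using walk_parity[where n=n and vs=vs and v=v] pv(2) by simp
  qed
  have gV: "vs n \<in> V"
  proof (cases n)
    case 0 then show ?thesis using pv(2) assms(3) by simp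
  next
    case (Suc m)
    have "m < n" using Suc by simp
    then have "p m \<in> {1..n}" using bij_betwE[OF pv(1)] by blast
    then have "E (p m) \<in> V \<times> V" using assms(2) unfolding labeled_graphs_def by (auto simp: PiE_iff)
    moreover have "E (p m) = (vs m, vs (Suc m)) \<or> E (p m) = (vs (Suc m), vs m)" using pv(3) \<open>m < n\<close> by blast
    ultimately show ?thesis using Suc by (auto simp: mem_Times_iff)
  qed
  have "has_eulerian_pseudo_path V E n s (vs n)"
    unfolding has_eulerian_pseudo_path_def
  proof (intro conjI ballI impI)
    fix v assume "v \<in> V" "v \<noteq> s \<and> v \<noteq> vs n"
    then show "even (deg E n v)" using dgv[of v] by auto
  next
    show "if vs n = s then even (deg E n s) else odd (deg E n s) \<and> odd (deg E n (vs n))"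
      using dgv[of s] dgv[of "vs n"] by auto
  qed
  then show ?thesis using gV by blast
qed

lemma pseudo_pp:
  assumes "E \<in> labeled_graphs V n" "s \<in> V" "g \<in> V" "has_eulerian_pseudo_path V E n s g"
  shows "pp E {1..n} s g"
  unfolding pp_def
proof
  fix v
  show "odd (dg E {1..n} v) = ((v = s) \<noteq> (v = g))"
  proof (cases "v \<in> V")
    case True
    have h: "\<forall>v\<in>V. v \<noteq> s \<and> v \<noteq> g \<longrightarrow> even (dg E {1..n} v)"
      "if g = s then even (dg E {1..n} s) else odd (dg E {1..n} s) \<and> odd (dg E {1..n} g)"
      using assms(4) unfolding has_eulerian_pseudo_path_def deg_dg by blast+
    show ?thesis
    proof (cases "g = s")
      case True
      then show ?thesis using h True \<open>v \<in> V\<close> by (cases "v = s") simp_all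
    next
      case False
      then show ?thesis using h \<open>v \<in> V\<close> by (cases "v = s"; cases "v = g") simp_all
    qed
  next
    case False
    have "\<forall>i\<in>{1..n}. E i \<in> V \<times> V" using assms(1) unfolding labeled_graphs_def by (auto simp: PiE_iff)
    then have "\<forall>i\<in>{1..n}. fst (E i) \<noteq> v \<and> snd (E i) \<noteq> v" using False by (auto simp: mem_Times_iff)
    then have "dg E {1..n} v = 0" by (intro dg_zero) auto
    then show ?thesis using False assms(2,3) by auto
  qed
qed



lemma sq_bound:
  fixes c d :: nat
  assumes "c \<ge> 1" "d \<ge> 1"
  shows "c * c + d * d \<le> (c + d - 1) * (c + d - 1) + 1"
proof -
  obtain c' d' where "c = Suc c'" "d = Suc d'" using assms by (metis Suc_le_D One_nat_def)
  then show ?thesis by (simp add: algebra_simps)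
qed

lemma bad_bound:
  assumes finV: "finite V" and eV: "e \<in> V" and cV: "card V = k"
  shows "card ({E \<in> labeled_graphs V n. \<exists>g\<in>V. has_eulerian_pseudo_path V E n e g}
           - {E \<in> labeled_graphs V n. has_eulerian_path_from E n e})
         \<le> 2 ^ k * ((k - 1) * (k - 1) + 1) ^ n"
proof -
  define A where "A R = R \<times> R \<union> (V - R) \<times> (V - R)" for R
  define Rs where "Rs = {R. R \<subseteq> V \<and> e \<in> R \<and> R \<noteq> V}"
  have finRs: "finite Rs" unfolding Rs_def using finV by (auto intro: finite_subset[of _ "Pow V"])
  have cRs: "card Rs \<le> 2 ^ k"
  proof -
    have "card Rs \<le> card (Pow V)" using finV unfolding Rs_def by (intro card_mono) auto
    then show ?thesis using card_Pow[of V] cV finV by simp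
  qed
  have sub: "{E \<in> labeled_graphs V n. \<exists>g\<in>V. has_eulerian_pseudo_path V E n e g}
           - {E \<in> labeled_graphs V n. has_eulerian_path_from E n e}
           \<subseteq> (\<Union>R\<in>Rs. PiE {1..n} (\<lambda>_. A R))"
  proof
    fix E assume "E \<in> {E \<in> labeled_graphs V n. \<exists>g\<in>V. has_eulerian_pseudo_path V E n e g}
           - {E \<in> labeled_graphs V n. has_eulerian_path_from E n e}"
    then have EL: "E \<in> labeled_graphs V n" and ps: "\<exists>g\<in>V. has_eulerian_pseudo_path V E n e g"
      and ne: "\<not> has_eulerian_path_from E n e" by auto
    obtain g where g: "g \<in> V" "has_eulerian_pseudo_path V E n e g" using ps by auto
    have ppE: "pp E {1..n} e g" by (rule pseudo_pp[OF EL eV g])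
    have nc: "\<not> conn E {1..n} e" using euler_path[OF ppE] ne by auto
    have EV: "E i \<in> V \<times> V" if "i \<in> {1..n}" for i
      using EL that unfolding labeled_graphs_def by (auto simp: PiE_iff)
    define R where "R = {v\<in>V. reach E {1..n} e v}"
    have eR: "e \<in> R" using eV unfolding R_def by auto
    obtain i where i: "i \<in> {1..n}" "\<not> reach E {1..n} e (fst (E i))" using nc unfolding conn_def by auto
    have "fst (E i) \<in> V" using EV[OF i(1)] by (auto simp: mem_Times_iff)
    then have "R \<noteq> V" using i(2) unfolding R_def by auto
    then have RRs: "R \<in> Rs" using eR unfolding Rs_def R_def by auto
    have "E \<in> PiE {1..n} (\<lambda>_. A R)"
      unfolding PiE_iff
    proof
      show "\<forall>j\<in>{1..n}. E j \<in> A R"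
      proof
        fix j assume j: "j \<in> {1..n}"
        have a1: "adj E {1..n} (fst (E j)) (snd (E j))" "adj E {1..n} (snd (E j)) (fst (E j))"
          using j unfolding adj_def by (cases "E j"; auto)+
        have "reach E {1..n} e (fst (E j)) \<longleftrightarrow> reach E {1..n} e (snd (E j))"
          using a1 by (meson rtranclp.rtrancl_into_rtrancl)
        moreover have "fst (E j) \<in> V" "snd (E j) \<in> V" using EV[OF j] by (auto simp: mem_Times_iff)
        ultimately show "E j \<in> A R" unfolding A_def R_def by (cases "E j") auto
      qed
    next
      show "E \<in> extensional {1..n}" using EL unfolding labeled_graphs_def by (auto simp: PiE_iff)
    qed
    then show "E \<in> (\<Union>R\<in>Rs. PiE {1..n} (\<lambda>_. A R))" using RRs by blast
  qed
  have cardA: "card (PiE {1..n} (\<lambda>_. A R)) \<le> ((k - 1) * (k - 1) + 1) ^ n" if "R \<in> Rs" for R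
  proof -
    have RV: "R \<subseteq> V" "e \<in> R" "R \<noteq> V" using that unfolding Rs_def by auto
    have finR: "finite R" using finite_subset[OF RV(1) finV] .
    have c1: "card R \<ge> 1" using RV(2) finR by (metis One_nat_def Suc_leI card_gt_0_iff empty_iff)
    have "card R < k" using psubset_card_mono[OF finV] RV cV by auto
    then have d1: "card (V - R) \<ge> 1" and dk: "card (V - R) = k - card R"
      using card_Diff_subset[OF finR RV(1)] cV by auto
    have "card (A R) = card R * card R + card (V - R) * card (V - R)"
      unfolding A_def
      by (subst card_Un_disjoint) (use finR finV in \<open>auto simp: card_cartesian_product\<close>)
    also have "\<dots> \<le> (card R + card (V - R) - 1) * (card R + card (V - R) - 1) + 1"
      by (rule sq_bound[OF c1 d1])
    also have "card R + card (V - R) = k" using dk \<open>card R < k\<close> by simp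
    finally have "card (A R) \<le> (k - 1) * (k - 1) + 1" .
    then show ?thesis by (simp add: card_PiE power_mono)
  qed
  have "card ({E \<in> labeled_graphs V n. \<exists>g\<in>V. has_eulerian_pseudo_path V E n e g}
           - {E \<in> labeled_graphs V n. has_eulerian_path_from E n e})
        \<le> card (\<Union>R\<in>Rs. PiE {1..n} (\<lambda>_. A R))"
    by (rule card_mono[OF _ sub]) (use finRs finV in \<open>auto simp: A_def Rs_def intro!: finite_PiE finite_cartesian_product intro: rev_finite_subset\<close>)
  also have "\<dots> \<le> (\<Sum>R\<in>Rs. card (PiE {1..n} (\<lambda>_. A R)))" by (rule card_UN_le[OF finRs])
  also have "\<dots> \<le> (\<Sum>R\<in>Rs. ((k - 1) * (k - 1) + 1) ^ n)" by (rule sum_mono) (rule cardA)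
  also have "\<dots> = card Rs * ((k - 1) * (k - 1) + 1) ^ n" by simp
  also have "\<dots> \<le> 2 ^ k * ((k - 1) * (k - 1) + 1) ^ n" using cRs by simp
  finally show ?thesis .
qed



lemma good_lower:
  assumes finV: "finite V" and eV: "e \<in> V" and cV: "card V = k" and k1: "k \<ge> 1"
  shows "(k * k) ^ N \<le> card {E \<in> labeled_graphs V (N + (k - 1)). \<exists>g\<in>V. has_eulerian_pseudo_path V E (N + (k - 1)) e g}"
proof -
  define n where "n = N + (k - 1)"
  have cVe: "card (V - {e}) = k - 1" using cV eV finV by simp
  obtain w where w: "bij_betw w {1..k-1} (V - {e})"
    using ex_bij_betw_nat_finite_1[of "V - {e}"] finV cVe by auto
  define ext where "ext F i = (if i \<in> {1..N} then F i else if i \<in> {N+1..n} then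
      (if odd (dg F {1..N} (w (i - N))) then (e, w (i - N)) else (e, e)) else undefined)" for F :: "nat \<Rightarrow> 'a \<times> 'a" and i
  define good where "good = {E \<in> labeled_graphs V n. \<exists>g\<in>V. has_eulerian_pseudo_path V E n e g}"
  have wV: "w j \<in> V - {e}" if "j \<in> {1..k-1}" for j using w that bij_betwE by blast
  have extL: "ext F \<in> labeled_graphs V n" if F: "F \<in> labeled_graphs V N" for F
    unfolding labeled_graphs_def PiE_iff
  proof
    show "\<forall>i\<in>{1..n}. ext F i \<in> V \<times> V"
    proof
      fix i assume i: "i \<in> {1..n}"
      show "ext F i \<in> V \<times> V"
      proof (cases "i \<in> {1..N}")
        case True then show ?thesis using F unfolding ext_def labeled_graphs_def by (auto simp: PiE_iff)
      next
        case False
        then have "i - N \<in> {1..k-1}" using i unfolding n_def by auto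
        then show ?thesis using False i wV eV unfolding ext_def by auto
      qed
    qed
    show "ext F \<in> extensional {1..n}" unfolding ext_def extensional_def n_def by auto
  qed
  have extD: "even (dg (ext F) {1..n} v)" if F: "F \<in> labeled_graphs V N" and v: "v \<in> V" "v \<noteq> e" for F v
  proof -
    have split: "{1..n} = {1..N} \<union> {N+1..n}" unfolding n_def by auto
    have d1: "dg (ext F) {1..N} v = dg F {1..N} v" by (rule dg_cong) (simp add: ext_def)
    have "{N+1..n} = {1+N..(k-1)+N}" unfolding n_def by (simp add: add.commute)
    then have "dg (ext F) {N+1..n} v = (\<Sum>j\<in>{1..k-1}. of_bool (fst (ext F (j + N)) = v) + of_bool (snd (ext F (j + N)) = v))"
      unfolding dg_def by (simp only: sum.shift_bounds_cl_nat_ivl)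
    also have "\<dots> = (\<Sum>j\<in>{1..k-1}. (\<lambda>x. if x = v then of_bool (odd (dg F {1..N} v)) else 0) (w j))"
    proof (rule sum.cong)
      fix j assume j: "j \<in> {1..k-1}"
      then have "ext F (j + N) = (if odd (dg F {1..N} (w j)) then (e, w j) else (e, e))"
        unfolding ext_def n_def by auto
      then show "(of_bool (fst (ext F (j + N)) = v) + of_bool (snd (ext F (j + N)) = v) :: nat) =
          (\<lambda>x. if x = v then of_bool (odd (dg F {1..N} v)) else 0) (w j)"
        using v wV[OF j] by auto
    qed simp
    also have "\<dots> = (\<Sum>x\<in>V - {e}. if x = v then of_bool (odd (dg F {1..N} v)) else 0)"
      by (rule sum.reindex_bij_betw[OF w])
    also have "\<dots> = of_bool (odd (dg F {1..N} v))" using v finV by simp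
    finally have d2: "dg (ext F) {N+1..n} v = of_bool (odd (dg F {1..N} v))" .
    have "dg (ext F) {1..n} v = dg (ext F) {1..N} v + dg (ext F) {N+1..n} v"
      unfolding split by (rule dg_union) auto
    then show ?thesis using d1 d2 by simp
  qed
  have extG: "ext F \<in> good" if F: "F \<in> labeled_graphs V N" for F
  proof -
    have EV: "ext F ` {1..n} \<subseteq> V \<times> V" using extL[OF F] unfolding labeled_graphs_def by (auto simp: PiE_iff)
    have "{v\<in>V. odd (dg (ext F) {1..n} v)} \<subseteq> {e}" using extD[OF F] by auto
    moreover have "even (card {v\<in>V. odd (dg (ext F) {1..n} v)})" by (rule odd_set_even[OF _ finV EV]) simp
    ultimately have "card {v\<in>V. odd (dg (ext F) {1..n} v)} = 0"
      by (metis (no_types, lifting) One_nat_def card.empty card.insert empty_iff finite.intros(1) odd_one subset_singletonD)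
    then have "{v\<in>V. odd (dg (ext F) {1..n} v)} = {}" using finV by simp
    then have "\<forall>v\<in>V. even (deg (ext F) n v)" unfolding deg_dg by auto
    then have "has_eulerian_pseudo_path V (ext F) n e e"
      unfolding has_eulerian_pseudo_path_def using eV by auto
    then show ?thesis unfolding good_def using extL[OF F] eV by auto
  qed
  have inj: "inj_on ext (labeled_graphs V N)"
  proof
    fix F F' assume F: "F \<in> labeled_graphs V N" and F': "F' \<in> labeled_graphs V N" and eq: "ext F = ext F'"
    show "F = F'"
    proof (rule PiE_ext)
      show "F \<in> PiE {1..N} (\<lambda>_. V \<times> V)" using F unfolding labeled_graphs_def .
      show "F' \<in> PiE {1..N} (\<lambda>_. V \<times> V)" using F' unfolding labeled_graphs_def .
      fix i assume "i \<in> {1..N}"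
      then show "F i = F' i" using fun_cong[OF eq, of i] unfolding ext_def by simp
    qed
  qed
  have fing: "finite good" unfolding good_def labeled_graphs_def
    by (rule finite_subset[of _ "PiE {1..n} (\<lambda>_. V \<times> V)"]) (auto intro!: finite_PiE simp: finV)
  have "card (labeled_graphs V N) \<le> card good"
    by (rule card_inj_on_le[OF inj _ fing]) (use extG in auto)
  moreover have "card (labeled_graphs V N) = (k * k) ^ N"
    unfolding labeled_graphs_def using cV by (simp add: card_PiE card_cartesian_product)
  ultimately show ?thesis unfolding good_def n_def by simp
qed



theorem mainTheorem16:
  fixes G :: "('a, 'b) monoid_scheme" and k :: nat
  assumes "group G" and "finite (carrier G)" and "card (carrier G) = k" and "k \<ge> 2"
  shows "(\<lambda>n. real (m_count G n) / real (gamma_count G n)) \<longlonglongrightarrow> 1"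
proof -
  define V where "V = carrier G"
  define e where "e = \<one>\<^bsub>G\<^esub>"
  have eV: "e \<in> V" unfolding e_def V_def using assms(1) by (simp add: group.is_monoid monoid.one_closed)
  have finV: "finite V" using assms(2) unfolding V_def .
  have cV: "card V = k" using assms(3) unfolding V_def .
  define q where "q = (k - 1) * (k - 1) + 1"
  define good where "good n = {E \<in> labeled_graphs V n. \<exists>g\<in>V. has_eulerian_pseudo_path V E n e g}" for n
  define eul where "eul n = {E \<in> labeled_graphs V n. has_eulerian_path_from E n e}" for n
  have gam: "gamma_count G n = card (good n)" for n unfolding gamma_count_def good_def V_def e_def ..
  have mc: "m_count G n = card (eul n)" for n unfolding m_count_def eul_def V_def e_def ..
  have fing: "finite (good n)" for n unfolding good_def labeled_graphs_def
    by (rule finite_subset[of _ "PiE {1..n} (\<lambda>_. V \<times> V)"]) (auto intro!: finite_PiE simp: finV)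
  have sub: "eul n \<subseteq> good n" for n
  proof
    fix E assume "E \<in> eul n"
    then have "E \<in> labeled_graphs V n" "has_eulerian_path_from E n e" unfolding eul_def by auto
    then show "E \<in> good n" using path_pseudo[of E n e V] eV unfolding good_def by auto
  qed
  have le1: "m_count G n \<le> gamma_count G n" for n
    unfolding gam mc by (rule card_mono[OF fing sub])
  have le2: "gamma_count G n \<le> m_count G n + 2 ^ k * q ^ n" for n
  proof -
    have "card (good n) = card (eul n) + card (good n - eul n)"
      using card_Diff_subset[OF finite_subset[OF sub fing] sub] card_mono[OF fing sub] by simp
    moreover have "card (good n - eul n) \<le> 2 ^ k * q ^ n"
      unfolding good_def eul_def q_def by (rule bad_bound[OF finV eV cV])
    ultimately show ?thesis unfolding gam mc by simp
  qed
  have le3: "(k * k) ^ (n - (k - 1)) \<le> gamma_count G n" if "n \<ge> k - 1" for n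
  proof -
    have k1: "k \<ge> 1" using assms(4) by simp
    have eq: "n - (k - 1) + (k - 1) = n" using that by simp
    show ?thesis unfolding gam good_def
      using good_lower[OF finV eV cV k1, of "n - (k - 1)"] unfolding eq .
  qed
  define K where "K = real (k * k)"
  define C0 where "C0 = 2 ^ k * K ^ (k - 1)"
  have Kpos: "K > 0" unfolding K_def using assms(4) by simp
  have qK: "real q / K < 1" "real q / K \<ge> 0"
  proof -
    obtain j where j: "k = Suc j" using assms(4) by (cases k) auto
    then have j1: "j \<ge> 1" using assms(4) by simp
    have "q < k * k" unfolding q_def using j j1 by (simp add: algebra_simps)
    then have "real q < K" unfolding K_def by linarith
    then show "real q / K < 1" using Kpos by simp
    show "real q / K \<ge> 0" using Kpos by simp
  qed
  have lim0: "(\<lambda>n. 1 - C0 * (real q / K) ^ n) \<longlonglongrightarrow> 1"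
  proof -
    have "(\<lambda>n. (real q / K) ^ n) \<longlonglongrightarrow> 0" using qK by (intro LIMSEQ_power_zero) auto
    then have "(\<lambda>n. C0 * (real q / K) ^ n) \<longlonglongrightarrow> 0" by (rule tendsto_mult_right_zero)
    then have "(\<lambda>n. 1 - C0 * (real q / K) ^ n) \<longlonglongrightarrow> 1 - 0" by (intro tendsto_diff) auto
    then show ?thesis by simp
  qed
  show ?thesis
  proof (rule tendsto_sandwich[OF _ _ lim0 tendsto_const])
    show "\<forall>\<^sub>F n in sequentially. real (m_count G n) / real (gamma_count G n) \<le> 1"
      using le1 by (intro always_eventually allI) (auto simp: divide_le_eq_1)
    show "\<forall>\<^sub>F n in sequentially. 1 - C0 * (real q / K) ^ n \<le> real (m_count G n) / real (gamma_count G n)"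
    proof (rule eventually_sequentiallyI[of "k - 1"])
      fix n assume n: "k - 1 \<le> n"
      define g where "g = real (gamma_count G n)"
      define m where "m = real (m_count G n)"
      have "real ((k * k) ^ (n - (k - 1))) \<le> real (gamma_count G n)" using le3[OF n] by (simp only: of_nat_le_iff)
      then have gl: "K ^ (n - (k - 1)) \<le> g" unfolding g_def K_def by (simp only: of_nat_power)
      have gpos: "g > 0" using gl Kpos by (meson less_le_trans zero_less_power)
      have "real (gamma_count G n) \<le> real (m_count G n + 2 ^ k * q ^ n)" using le2[of n] by (simp only: of_nat_le_iff)
      then have mg: "g \<le> m + 2 ^ k * real q ^ n" unfolding g_def m_def by simp
      have Kn: "K ^ n = K ^ (n - (k - 1)) * K ^ (k - 1)" using n by (simp flip: power_add)
      have "C0 * (real q / K) ^ n = 2 ^ k * real q ^ n / K ^ (n - (k - 1))"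
        unfolding C0_def power_divide Kn using Kpos by (simp add: field_simps)
      also have "\<dots> \<ge> 2 ^ k * real q ^ n / g"
        by (rule divide_left_mono[OF gl]) (use Kpos gpos in auto)
      finally have "1 - C0 * (real q / K) ^ n \<le> 1 - 2 ^ k * real q ^ n / g" by simp
      also have "\<dots> = (g - 2 ^ k * real q ^ n) / g" using gpos by (simp add: field_simps)
      also have "\<dots> \<le> m / g" using mg gpos by (intro divide_right_mono) auto
      finally show "1 - C0 * (real q / K) ^ n \<le> real (m_count G n) / real (gamma_count G n)"
        unfolding m_def g_def .
    qed
  qed
qed

end
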